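(* For positive integers $d,n$ let $P^{d,n}$ be the class of simple graphs on $n$ vertices that admit a faithful orthogonal representation in $\mathbb{R}^d$. The graph property $P^{d,n}$ is not monotone-decreasing: there exist $d, n$, a graph $G \in P^{d,n}$ and an edge $uv$ of $G$ such that the graph $G \setminus uv$ obtained by deleting the edge $uv$ is not in $P^{d,n}$.
   Context: All graphs are finite, simple and undirected. A faithful orthogonal representation of a graph $G$ in $\mathbb{R}^d$ is an assignment of unit vectors $v \mapsto |v\rangle \in \mathbb{R}^d$ to the vertices such that two vertices are adjacent iff their vectors are orthogonal, and distinct vertices are assigned distinct vectors. A graph property is monotone-decreasing if it is closed under removal of edges (and vertices). *)

theory Defs
  imports Main "HOL-Analysis.Analysis"
begin

definition simple_graph :: "nat \<Rightarrow> (nat \<Rightarrow> nat \<Rightarrow> bool) \<Rightarrow> bool" where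
  "simple_graph n E \<longleftrightarrow>
     (\<forall>u v. E u v \<longrightarrow> u < n \<and> v < n) \<and>
     (\<forall>u v. E u v \<longrightarrow> E v u) \<and>
     (\<forall>u. \<not> E u u)"

text \<open>Vectors of R^d are represented as functions nat => real vanishing outside {0..<d}.\<close>

definition vec_in :: "nat \<Rightarrow> (nat \<Rightarrow> real) \<Rightarrow> bool" where
  "vec_in d x \<longleftrightarrow> (\<forall>i\<ge>d. x i = 0)"

definition inner_d :: "nat \<Rightarrow> (nat \<Rightarrow> real) \<Rightarrow> (nat \<Rightarrow> real) \<Rightarrow> real" where
  "inner_d d x y = (\<Sum>i<d. x i * y i)"

definition faithful_orth_rep ::
    "nat \<Rightarrow> nat \<Rightarrow> (nat \<Rightarrow> nat \<Rightarrow> bool) \<Rightarrow> (nat \<Rightarrow> nat \<Rightarrow> real) \<Rightarrow> bool" where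
  "faithful_orth_rep d n E f \<longleftrightarrow>
     (\<forall>v<n. vec_in d (f v) \<and> inner_d d (f v) (f v) = 1) \<and>
     (\<forall>u<n. \<forall>v<n. u \<noteq> v \<longrightarrow> (E u v \<longleftrightarrow> inner_d d (f u) (f v) = 0)) \<and>
     (\<forall>u<n. \<forall>v<n. u \<noteq> v \<longrightarrow> f u \<noteq> f v)"

definition P_class :: "nat \<Rightarrow> nat \<Rightarrow> (nat \<Rightarrow> nat \<Rightarrow> bool) \<Rightarrow> bool" where
  "P_class d n E \<longleftrightarrow> simple_graph n E \<and> (\<exists>f. faithful_orth_rep d n E f)"

definition delete_edge :: "(nat \<Rightarrow> nat \<Rightarrow> bool) \<Rightarrow> nat \<Rightarrow> nat \<Rightarrow> nat \<Rightarrow> nat \<Rightarrow> bool" where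
  "delete_edge E u v = (\<lambda>x y. E x y \<and> {x, y} \<noteq> {u, v})"

end

theory Submission
  imports Defs
begin

lemma inner2: "inner_d 2 x y = x 0 * y 0 + x 1 * y 1"
  by (simp add: inner_d_def numeral_2_eq_2)

lemma alg:
  fixes a0 a1 x0 x1 y0 y1 z0 z1 :: real
  assumes "a0*x0+a1*x1=0" "a0*y0+a1*y1=0" "y0*z0+y1*z1=0" "a0*a0+a1*a1=1" "y0*y0+y1*y1=1"
  shows "x0*z0+x1*z1=0"
proof -
  define s where "s = a0*x1 - a1*x0"
  define t where "t = a0*y1 - a1*y0"
  have x0: "x0 = - a1 * s" and x1: "x1 = a0 * s" using assms unfolding s_def by algebra+
  have y0: "y0 = - a1 * t" and y1: "y1 = a0 * t" using assms unfolding t_def by algebra+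
  have "t*t = 1" using assms(4,5) unfolding y0 y1 by algebra
  hence "t \<noteq> 0" by auto
  have "t * (-a1*z0 + a0*z1) = 0" using assms(3) unfolding y0 y1 by algebra
  hence "-a1*z0 + a0*z1 = 0" using \<open>t \<noteq> 0\<close> by simp
  thus ?thesis unfolding x0 x1 by algebra
qed

definition C4 :: "nat \<Rightarrow> nat \<Rightarrow> bool" where
  "C4 u v = (u < 4 \<and> v < 4 \<and> odd (u + v))"

definition rep :: "nat \<Rightarrow> nat \<Rightarrow> real" where
  "rep v i = (if i = v mod 2 then (if v < 2 then 1 else -1) else 0)"

lemma four: "(v::nat) < 4 \<longleftrightarrow> v = 0 \<or> v = 1 \<or> v = 2 \<or> v = 3" by auto

lemma C4_P: "P_class 2 4 C4"
  unfolding P_class_def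
proof
  show "simple_graph 4 C4" unfolding simple_graph_def C4_def by auto
  have ne: "rep u \<noteq> rep v" if "u < 4" "v < 4" "u \<noteq> v" for u v
  proof
    assume "rep u = rep v"
    hence "rep u 0 = rep v 0" "rep u 1 = rep v 1" by auto
    thus False using that unfolding four rep_def by auto
  qed
  show "\<exists>f. faithful_orth_rep 2 4 C4 f"
    apply (rule exI[of _ rep])
    unfolding faithful_orth_rep_def
    using ne by (auto simp: inner2 vec_in_def rep_def C4_def four)
qed

lemma path_not: "\<not> P_class 2 4 (delete_edge C4 0 3)"
proof
  assume "P_class 2 4 (delete_edge C4 0 3)"
  then obtain f where f: "faithful_orth_rep 2 4 (delete_edge C4 0 3) f"
    unfolding P_class_def by auto
  have E: "delete_edge C4 0 3 u v \<longleftrightarrow> C4 u v \<and> {u,v} \<noteq> {0,3}" for u v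
    by (simp add: delete_edge_def)
  have adj: "\<And>u v. u < 4 \<Longrightarrow> v < 4 \<Longrightarrow> u \<noteq> v \<Longrightarrow>
      (delete_edge C4 0 3 u v \<longleftrightarrow> inner_d 2 (f u) (f v) = 0)"
    using f unfolding faithful_orth_rep_def by blast
  have n1: "inner_d 2 (f 1) (f 1) = 1" and n2: "inner_d 2 (f 2) (f 2) = 1"
    using f unfolding faithful_orth_rep_def by auto
  have h01: "inner_d 2 (f 1) (f 0) = 0" using adj[of 1 0] by (simp add: E C4_def doubleton_eq_iff)
  have h12: "inner_d 2 (f 1) (f 2) = 0" using adj[of 1 2] by (simp add: E C4_def doubleton_eq_iff)
  have h23: "inner_d 2 (f 2) (f 3) = 0" using adj[of 2 3] by (simp add: E C4_def doubleton_eq_iff)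
  have h03: "inner_d 2 (f 0) (f 3) \<noteq> 0"
  proof -
    have "\<not> delete_edge C4 0 3 0 3" by (simp add: E)
    thus ?thesis using adj[of 0 3] by simp
  qed
  show False using alg[of "f 1 0" "f 0 0" "f 1 1" "f 0 1" "f 2 0" "f 2 1" "f 3 0" "f 3 1"]
    h01 h12 h23 h03 n1 n2 by (simp add: inner2)
qed

theorem mainTheorem3:
  shows "\<exists>d n E u v. 0 < d \<and> 0 < n \<and> P_class d n E \<and> E u v \<and>
           \<not> P_class d n (delete_edge E u v)"
  apply (rule exI[of _ 2], rule exI[of _ 4], rule exI[of _ C4], rule exI[of _ 0], rule exI[of _ 3])
  using C4_P path_not by (simp add: C4_def)

end
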